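(* Let $\mathbb{S}$ be a metric space with its Borel $\sigma$-field, let $\{\mu_n\}_{n=1,2,\ldots}$ be a sequence of measures on $\mathbb{S}$ converging weakly to a finite measure $\mu$ on $\mathbb{S}$, and let $\{f_n\}_{n=1,2,\ldots}$ be a sequence of measurable $[-\infty,+\infty]$-valued functions on $\mathbb{S}$ such that $\{f_n^-\}_{n=1,2,\ldots}$ is asymptotically uniformly integrable with respect to $\{\mu_n\}_{n=1,2,\ldots}$. Then $$\int_{\mathbb{S}}\liminf_{n\to\infty,\,s'\to s} f_n(s')\,\mu(ds)\le\liminf_{n\to\infty}\int_{\mathbb{S}} f_n(s)\,\mu_n(ds).$$
   Context: $\mu_n$ converges weakly to $\mu$ means $\int f\,d\mu_n\to\int f\,d\mu$ for every bounded continuous $f:\mathbb{S}\to\mathbb{R}$. $f^-=-\min\{f,0\}$, $f^+=\max\{f,0\}$. For an extended-real function $f$ and measure $\nu$, $\int f\,d\nu:=\int f^+d\nu-\int f^-d\nu$, defined when $\min\{\int f^+d\nu,\int f^-d\nu\}<\infty$; all integrals appearing in the hypotheses and conclusion are assumed to be defined. $\liminf_{n\to\infty,s'\to s}f_n(s'):=\sup_{n\ge1,\delta>0}\inf_{m\ge n,\,s'\in B_\delta(s)}f_m(s')$, where $B_\delta(s)$ is the open ball of radius $\delta$ about $s$. A sequence $\{h_n\}$ is asymptotically uniformly integrable with respect to $\{\mu_n\}$ if $\lim_{K\to+\infty}\limsup_{n\to\infty}\int|h_n|\,\mathbf{1}\{|h_n|\ge K\}\,d\mu_n=0$. *)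

theory Defs
  imports "HOL-Analysis.Analysis"
begin

definition pos_part :: "('a \<Rightarrow> ereal) \<Rightarrow> 'a \<Rightarrow> ereal" where
  "pos_part f = (\<lambda>x. max (f x) 0)"

definition neg_part :: "('a \<Rightarrow> ereal) \<Rightarrow> 'a \<Rightarrow> ereal" where
  "neg_part f = (\<lambda>x. - min (f x) 0)"

definition pos_integral :: "'a measure \<Rightarrow> ('a \<Rightarrow> ereal) \<Rightarrow> ereal" where
  "pos_integral M f = enn2ereal (\<integral>\<^sup>+ x. e2ennreal (pos_part f x) \<partial>M)"

definition neg_integral :: "'a measure \<Rightarrow> ('a \<Rightarrow> ereal) \<Rightarrow> ereal" where
  "neg_integral M f = enn2ereal (\<integral>\<^sup>+ x. e2ennreal (neg_part f x) \<partial>M)"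

definition integral_defined :: "'a measure \<Rightarrow> ('a \<Rightarrow> ereal) \<Rightarrow> bool" where
  "integral_defined M f \<longleftrightarrow> min (pos_integral M f) (neg_integral M f) < \<infinity>"

definition ext_integral :: "'a measure \<Rightarrow> ('a \<Rightarrow> ereal) \<Rightarrow> ereal" where
  "ext_integral M f = pos_integral M f - neg_integral M f"

definition weak_conv :: "(nat \<Rightarrow> 'a::metric_space measure) \<Rightarrow> 'a measure \<Rightarrow> bool" where
  "weak_conv \<mu>s \<mu> \<longleftrightarrow>
     (\<forall>g :: 'a \<Rightarrow> real. continuous_on UNIV g \<and> bounded (range g) \<longrightarrow>
        (\<forall>n. integral_defined (\<mu>s n) (\<lambda>x. ereal (g x))) \<and>
        integral_defined \<mu> (\<lambda>x. ereal (g x)) \<and>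
        (\<lambda>n. ext_integral (\<mu>s n) (\<lambda>x. ereal (g x)))
           \<longlonglongrightarrow> ext_integral \<mu> (\<lambda>x. ereal (g x)))"

definition joint_liminf :: "(nat \<Rightarrow> 'a::metric_space \<Rightarrow> ereal) \<Rightarrow> 'a \<Rightarrow> ereal" where
  "joint_liminf f s = (SUP p \<in> {(n, \<delta>). \<delta> > (0::real)}.
      (INF q \<in> {(m, s'). m \<ge> fst p \<and> s' \<in> ball s (snd p)}. f (fst q) (snd q)))"

definition asymp_unif_integrable ::
    "(nat \<Rightarrow> 'a \<Rightarrow> ereal) \<Rightarrow> (nat \<Rightarrow> 'a measure) \<Rightarrow> bool" where
  "asymp_unif_integrable h \<mu>s \<longleftrightarrow>
     ((\<lambda>K::real. limsup (\<lambda>n. \<integral>\<^sup>+ x. e2ennreal \<bar>h n x\<bar> *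
          indicator {y. \<bar>h n y\<bar> \<ge> ereal K} x \<partial>(\<mu>s n))) \<longlongrightarrow> 0) at_top"

end

theory Submission imports Defs begin

definition lsc :: "('a::metric_space \<Rightarrow> 'b::linorder) \<Rightarrow> bool" where
  "lsc h \<longleftrightarrow> (\<forall>s c. c < h s \<longrightarrow> (\<exists>\<delta>>0. \<forall>y\<in>ball s \<delta>. c < h y))"

lemma lsc_measurable:
  fixes h :: "'a::metric_space \<Rightarrow> 'b::{linorder_topology, second_countable_topology}"
  assumes "lsc h" shows "h \<in> borel_measurable borel"
proof (rule borel_measurableI_greater)
  fix y
  have "open {x. y < h x}"
    unfolding open_contains_ball using assms unfolding lsc_def
    by (fastforce simp: subset_iff mem_ball)
  then show "{x \<in> space borel. y < h x} \<in> sets borel" by auto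
qed

definition apx :: "('a::metric_space \<Rightarrow> ennreal) \<Rightarrow> nat \<Rightarrow> 'a \<Rightarrow> real" where
  "apx h k s = Inf (range (\<lambda>y. enn2real (min (h y) (of_nat k)) + real k * dist s y))"

lemma apx_bdd: "bdd_below (range (\<lambda>y. enn2real (min (h y) (of_nat k)) + real k * dist s y))"
  by (rule bdd_belowI[where m=0]) auto

lemma apx_le: "apx h k s \<le> enn2real (min (h y) (of_nat k)) + real k * dist s y"
  unfolding apx_def by (rule cInf_lower[OF _ apx_bdd]) auto

lemma apx_ge: "(\<And>y. c \<le> enn2real (min (h y) (of_nat k)) + real k * dist s y) \<Longrightarrow> c \<le> apx h k s"
  unfolding apx_def by (rule cInf_greatest) auto

lemma apx_nonneg: "0 \<le> apx h k s"
  by (rule apx_ge) auto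

lemma min_fin: "enn2real (min (h::ennreal) (of_nat k)) \<le> real k"
proof -
  have "min h (of_nat k) \<le> of_nat k" by simp
  then have "enn2real (min h (of_nat k)) \<le> enn2real (of_nat k :: ennreal)"
    by (rule enn2real_mono) (simp add: of_nat_less_top)
  then show ?thesis by simp
qed

lemma apx_upper: "apx h k s \<le> real k"
  using apx_le[of h k s s] min_fin[of "h s" k] by simp

lemma apx_lip: "apx h k s \<le> apx h k t + real k * dist s t"
proof -
  have "apx h k s - real k * dist s t \<le> apx h k t"
  proof (rule apx_ge)
    fix y
    have "apx h k s \<le> enn2real (min (h y) (of_nat k)) + real k * dist s y" by (rule apx_le)
    also have "dist s y \<le> dist t y + dist s t" by (metis dist_commute dist_triangle)
    then have "real k * dist s y \<le> real k * dist t y + real k * dist s t"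
      by (metis distrib_left mult_left_mono of_nat_0_le_iff)
    finally show "apx h k s - real k * dist s t \<le> enn2real (min (h y) (of_nat k)) + real k * dist t y"
      by simp
  qed
  then show ?thesis by simp
qed

lemma apx_cont: "continuous_on UNIV (apx h k)"
proof (rule lipschitz_on_continuous_on[where L="real k"], rule lipschitz_onI)
  fix x y
  show "dist (apx h k x) (apx h k y) \<le> real k * dist x y"
    using apx_lip[of h k x y] apx_lip[of h k y x]
    by (simp add: dist_real_def dist_commute abs_le_iff)
qed simp

lemma apx_bounded: "bounded (range (apx h k))"
  unfolding bounded_iff
proof (intro exI ballI)
  fix x assume "x \<in> range (apx h k)"
  then obtain s where "x = apx h k s" by auto
  then show "norm x \<le> real k" using apx_nonneg[of h k s] apx_upper[of h k s] by simp
qed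

lemma apx_le_h: "ennreal (apx h k s) \<le> h s"
proof -
  have "apx h k s \<le> enn2real (min (h s) (of_nat k))" using apx_le[of h k s s] by simp
  then have "ennreal (apx h k s) \<le> ennreal (enn2real (min (h s) (of_nat k)))"
    by (rule ennreal_leI)
  also have "\<dots> = min (h s) (of_nat k)"
    by (rule ennreal_enn2real) (simp add: min.strict_coboundedI2 of_nat_less_top)
  also have "\<dots> \<le> h s" by simp
  finally show ?thesis .
qed

lemma apx_mono: "k \<le> k' \<Longrightarrow> apx h k s \<le> apx h k' s"
proof (rule apx_ge)
  fix y assume "k \<le> k'"
  have "enn2real (min (h y) (of_nat k)) \<le> enn2real (min (h y) (of_nat k'))"
    by (rule enn2real_mono) (auto simp: min.coboundedI2 \<open>k \<le> k'\<close> min.strict_coboundedI2 of_nat_less_top)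
  moreover have "real k * dist s y \<le> real k' * dist s y"
    using \<open>k \<le> k'\<close> by (simp add: mult_right_mono)
  ultimately show "apx h k s \<le> enn2real (min (h y) (of_nat k')) + real k' * dist s y"
    using apx_le[of h k s y] by linarith
qed

lemma apx_incseq: "incseq (\<lambda>k s. ennreal (apx h k s))"
  by (auto simp: incseq_def le_fun_def intro!: ennreal_leI apx_mono)

lemma apx_SUP:
  assumes "lsc h" shows "(SUP k. ennreal (apx h k s)) = h s"
proof (rule antisym)
  show "(SUP k. ennreal (apx h k s)) \<le> h s" by (rule SUP_least) (rule apx_le_h)
  show "h s \<le> (SUP k. ennreal (apx h k s))"
  proof (rule dense_le)
    fix c assume c: "c < h s"
    then have "c \<noteq> top" by auto
    then obtain r where r: "c = ennreal r" "0 \<le> r"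
      by (cases c) auto
    obtain \<delta> where d: "\<delta> > 0" "\<And>y. y \<in> ball s \<delta> \<Longrightarrow> c < h y"
      using assms c unfolding lsc_def by blast
    define k where "k = nat \<lceil>r / \<delta>\<rceil> + nat \<lceil>r\<rceil>"
    have k1: "r \<le> real k" unfolding k_def by linarith
    have "r / \<delta> \<le> real k" unfolding k_def by linarith
    then have k2: "r \<le> real k * \<delta>" using d(1) by (simp add: divide_le_eq)
    have "r \<le> apx h k s"
    proof (rule apx_ge)
      fix y
      show "r \<le> enn2real (min (h y) (of_nat k)) + real k * dist s y"
      proof (cases "y \<in> ball s \<delta>")
        case True
        then have "c \<le> min (h y) (of_nat k)"
          using d(2)[OF True] k1 r by (simp add: ennreal_of_nat_eq_real_of_nat ennreal_leI)
        then have "enn2real c \<le> enn2real (min (h y) (of_nat k))"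
          by (rule enn2real_mono) (simp add: min.strict_coboundedI2 of_nat_less_top)
        then have "r \<le> enn2real (min (h y) (of_nat k))" using r by simp
        moreover have "0 \<le> real k * dist s y" by simp
        ultimately show ?thesis by linarith
      next
        case False
        then have "\<delta> \<le> dist s y" by simp
        then have "real k * \<delta> \<le> real k * dist s y" by (simp add: mult_left_mono)
        moreover have "0 \<le> enn2real (min (h y) (of_nat k))" by simp
        ultimately show ?thesis using k2 by linarith
      qed
    qed
    then have "c \<le> ennreal (apx h k s)" using r by (simp add: ennreal_leI)
    also have "\<dots> \<le> (SUP k. ennreal (apx h k s))" by (rule SUP_upper) simp
    finally show "c \<le> (SUP k. ennreal (apx h k s))" .
  qed
qed

lemma ext_nonneg:
  fixes \<phi> :: "'a \<Rightarrow> real"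
  assumes "\<And>x. 0 \<le> \<phi> x"
  shows "ext_integral M (\<lambda>x. ereal (\<phi> x)) = enn2ereal (\<integral>\<^sup>+ x. ennreal (\<phi> x) \<partial>M)"
proof -
  have "pos_part (\<lambda>x. ereal (\<phi> x)) = (\<lambda>x. ereal (\<phi> x))"
    using assms by (simp add: pos_part_def fun_eq_iff max_absorb1)
  moreover have "neg_part (\<lambda>x. ereal (\<phi> x)) = (\<lambda>x. 0)"
    using assms by (simp add: neg_part_def fun_eq_iff min_absorb2)
  ultimately show ?thesis
    by (simp add: ext_integral_def pos_integral_def neg_integral_def e2ennreal_neg zero_ennreal.rep_eq)
qed

lemma lsc_fatou:
  fixes h :: "'a::metric_space \<Rightarrow> ennreal"
    and \<mu>s :: "nat \<Rightarrow> 'a measure"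
  assumes lsc: "lsc h"
    and sets_\<mu>s: "\<And>n. sets (\<mu>s n) = sets borel"
    and sets_\<mu>: "sets \<mu> = sets borel"
    and weak: "weak_conv \<mu>s \<mu>"
  shows "(\<integral>\<^sup>+ x. h x \<partial>\<mu>) \<le> liminf (\<lambda>n. \<integral>\<^sup>+ x. h x \<partial>\<mu>s n)"
proof -
  have meas: "(\<lambda>s. ennreal (apx h k s)) \<in> borel_measurable \<mu>" for k
  proof -
    have "apx h k \<in> borel_measurable borel" by (rule borel_measurable_continuous_onI[OF apx_cont])
    then have "apx h k \<in> borel_measurable \<mu>" by (simp add: measurable_cong_sets[OF sets_\<mu> refl])
    then show ?thesis by (rule measurable_compose[OF _ measurable_ennreal])
  qed
  have "(\<integral>\<^sup>+ x. h x \<partial>\<mu>) = (\<integral>\<^sup>+ x. (SUP k. ennreal (apx h k x)) \<partial>\<mu>)"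
    using apx_SUP[OF lsc] by simp
  also have "\<dots> = (SUP k. \<integral>\<^sup>+ x. ennreal (apx h k x) \<partial>\<mu>)"
    by (rule nn_integral_monotone_convergence_SUP[OF apx_incseq meas])
  also have "\<dots> \<le> liminf (\<lambda>n. \<integral>\<^sup>+ x. h x \<partial>\<mu>s n)"
  proof (rule SUP_least)
    fix k
    have "(\<lambda>n. ext_integral (\<mu>s n) (\<lambda>x. ereal (apx h k x))) \<longlonglongrightarrow> ext_integral \<mu> (\<lambda>x. ereal (apx h k x))"
      using weak apx_cont[of h k] apx_bounded[of h k] unfolding weak_conv_def by blast
    then have "(\<lambda>n. enn2ereal (\<integral>\<^sup>+ x. ennreal (apx h k x) \<partial>\<mu>s n)) \<longlonglongrightarrow> enn2ereal (\<integral>\<^sup>+ x. ennreal (apx h k x) \<partial>\<mu>)"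
      by (simp add: ext_nonneg apx_nonneg)
    then have "(\<lambda>n. \<integral>\<^sup>+ x. ennreal (apx h k x) \<partial>\<mu>s n) \<longlonglongrightarrow> (\<integral>\<^sup>+ x. ennreal (apx h k x) \<partial>\<mu>)"
      by simp
    then have "(\<integral>\<^sup>+ x. ennreal (apx h k x) \<partial>\<mu>) = liminf (\<lambda>n. \<integral>\<^sup>+ x. ennreal (apx h k x) \<partial>\<mu>s n)"
      by (simp add: lim_imp_Liminf)
    also have "\<dots> \<le> liminf (\<lambda>n. \<integral>\<^sup>+ x. h x \<partial>\<mu>s n)"
      by (intro Liminf_mono always_eventually allI nn_integral_mono apx_le_h)
    finally show "(\<integral>\<^sup>+ x. ennreal (apx h k x) \<partial>\<mu>) \<le> liminf (\<lambda>n. \<integral>\<^sup>+ x. h x \<partial>\<mu>s n)" .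
  qed
  finally show ?thesis .
qed

lemma e2ennreal_zero[simp]: "e2ennreal 0 = 0" by (simp add: e2ennreal_neg)

definition env :: "(nat \<Rightarrow> 'a::metric_space \<Rightarrow> 'b::complete_lattice) \<Rightarrow> nat set \<Rightarrow> 'a \<Rightarrow> 'b" where
  "env v N s = (SUP p \<in> {(n, \<delta>). n \<in> N \<and> \<delta> > (0::real)}.
      (INF q \<in> {(m, s'). m \<ge> fst p \<and> s' \<in> ball s (snd p)}. v (fst q) (snd q)))"

lemma joint_liminf_env: "joint_liminf f = env f UNIV"
  by (simp add: joint_liminf_def env_def fun_eq_iff)

lemma env_lsc:
  fixes v :: "nat \<Rightarrow> 'a::metric_space \<Rightarrow> 'b::complete_linorder"
  shows "lsc (env v N)"
  unfolding lsc_def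
proof (intro allI impI)
  fix s c assume "c < env v N s"
  then obtain n \<delta> where p: "n \<in> N" "\<delta> > 0"
    and c: "c < (INF q \<in> {(m, s'). m \<ge> n \<and> s' \<in> ball s \<delta>}. v (fst q) (snd q))"
    unfolding env_def less_SUP_iff by auto
  show "\<exists>\<delta>>0. \<forall>y\<in>ball s \<delta>. c < env v N y"
  proof (intro exI conjI ballI)
    show "\<delta> > 0" by fact
    fix y assume y: "y \<in> ball s \<delta>"
    define \<delta>' where "\<delta>' = \<delta> - dist s y"
    have d': "\<delta>' > 0" using y by (simp add: \<delta>'_def)
    have sub: "ball y \<delta>' \<subseteq> ball s \<delta>"
      unfolding \<delta>'_def by (auto simp: subset_iff) (metis dist_triangle add.commute less_diff_eq order_le_less_trans)
    have "(INF q \<in> {(m, s'). m \<ge> n \<and> s' \<in> ball s \<delta>}. v (fst q) (snd q))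
        \<le> (INF q \<in> {(m, s'). m \<ge> n \<and> s' \<in> ball y \<delta>'}. v (fst q) (snd q))"
      by (rule INF_superset_mono) (use sub in auto)
    also have "\<dots> \<le> env v N y"
      unfolding env_def
      by (rule SUP_upper2[where i="(n, \<delta>')"]) (use p d' in auto)
    finally show "c < env v N y" using c by simp
  qed
qed

lemma env_single_le:
  fixes v :: "nat \<Rightarrow> 'a::metric_space \<Rightarrow> 'b::complete_lattice"
  assumes "n \<le> m" shows "env v {n} s \<le> v m s"
  unfolding env_def
proof (rule SUP_least)
  fix p assume "p \<in> {(n', \<delta>). n' \<in> {n} \<and> \<delta> > (0::real)}"
  then show "(INF q \<in> {(m, s'). m \<ge> fst p \<and> s' \<in> ball s (snd p)}. v (fst q) (snd q)) \<le> v m s"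
    using assms by (intro INF_lower2[where i="(m, s)"]) auto
qed

lemma env_single_mono:
  fixes v :: "nat \<Rightarrow> 'a::metric_space \<Rightarrow> 'b::complete_lattice"
  assumes "n \<le> n'" shows "env v {n} s \<le> env v {n'} s"
  unfolding env_def
proof (rule SUP_mono)
  fix p assume "p \<in> {(n'', \<delta>). n'' \<in> {n} \<and> \<delta> > (0::real)}"
  then obtain \<delta> where p: "p = (n, \<delta>)" "\<delta> > 0" by auto
  show "\<exists>p'\<in>{(n'', \<delta>). n'' \<in> {n'} \<and> \<delta> > (0::real)}.
     (INF q \<in> {(m, s'). m \<ge> fst p \<and> s' \<in> ball s (snd p)}. v (fst q) (snd q))
     \<le> (INF q \<in> {(m, s'). m \<ge> fst p' \<and> s' \<in> ball s (snd p')}. v (fst q) (snd q))"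
    using p assms by (intro bexI[where x="(n', \<delta>)"] INF_superset_mono) auto
qed

lemma env_UNIV_le:
  fixes v :: "nat \<Rightarrow> 'a::metric_space \<Rightarrow> 'b::complete_lattice"
  shows "env v UNIV s \<le> (SUP n. env v {n} s)"
  unfolding env_def
proof (rule SUP_least)
  fix p assume "p \<in> {(n, \<delta>). n \<in> (UNIV::nat set) \<and> \<delta> > (0::real)}"
  then obtain n \<delta> where p: "p = (n, \<delta>)" "\<delta> > 0" by auto
  have "(INF q \<in> {(m, s'). m \<ge> fst p \<and> s' \<in> ball s (snd p)}. v (fst q) (snd q))
      \<le> (SUP p \<in> {(n', \<delta>). n' \<in> {n} \<and> \<delta> > (0::real)}.
      (INF q \<in> {(m, s'). m \<ge> fst p \<and> s' \<in> ball s (snd p)}. v (fst q) (snd q)))"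
    using p by (intro SUP_upper) auto
  also have "\<dots> \<le> (SUP n. SUP p \<in> {(n', \<delta>). n' \<in> {n} \<and> \<delta> > (0::real)}.
      (INF q \<in> {(m, s'). m \<ge> fst p \<and> s' \<in> ball s (snd p)}. v (fst q) (snd q)))"
    by (rule SUP_upper) simp
  finally show "(INF q \<in> {(m, s'). m \<ge> fst p \<and> s' \<in> ball s (snd p)}. v (fst q) (snd q))
      \<le> (SUP n. SUP p \<in> {(n', \<delta>). n' \<in> {n} \<and> \<delta> > (0::real)}.
      (INF q \<in> {(m, s'). m \<ge> fst p \<and> s' \<in> ball s (snd p)}. v (fst q) (snd q)))" .
qed

lemma shift_le_env:
  fixes f :: "nat \<Rightarrow> 'a::metric_space \<Rightarrow> ereal" and K :: real
  shows "e2ennreal (joint_liminf f s + ereal K) \<le> env (\<lambda>n x. e2ennreal (f n x + ereal K)) UNIV s"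
proof -
  define P where "P = {(n, \<delta>). n \<in> (UNIV::nat set) \<and> \<delta> > (0::real)}"
  define I where "I p = (INF q \<in> {(m, s'). m \<ge> fst p \<and> s' \<in> ball s (snd p)}. f (fst q) (snd q))" for p
  have Pne: "P \<noteq> {}" unfolding P_def using zero_less_one by blast
  have "joint_liminf f s = (SUP p\<in>P. I p)"
    by (simp add: joint_liminf_env env_def P_def I_def)
  then have "joint_liminf f s + ereal K = (SUP p\<in>P. I p + ereal K)"
    using SUP_ereal_add_left[OF Pne, of "ereal K" I] by simp
  then have "e2ennreal (joint_liminf f s + ereal K) = e2ennreal (Sup ((\<lambda>p. I p + ereal K) ` P))"
    by simp
  also have "\<dots> = (SUP x\<in>(\<lambda>p. I p + ereal K) ` P. e2ennreal x)"
    by (rule continuous_at_Sup_mono) (auto simp: mono_def e2ennreal_mono continuous_at_e2ennreal Pne)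
  also have "\<dots> = (SUP p\<in>P. e2ennreal (I p + ereal K))"
    by (simp add: image_comp)
  also have "\<dots> \<le> env (\<lambda>n x. e2ennreal (f n x + ereal K)) UNIV s"
    unfolding env_def P_def[symmetric]
  proof (rule SUP_mono)
    fix p assume "p \<in> P"
    show "\<exists>p'\<in>P. e2ennreal (I p + ereal K) \<le> (INF q \<in> {(m, s'). m \<ge> fst p' \<and> s' \<in> ball s (snd p')}. e2ennreal (f (fst q) (snd q) + ereal K))"
    proof (intro bexI[OF _ \<open>p \<in> P\<close>] INF_greatest)
      fix q assume "q \<in> {(m, s'). m \<ge> fst p \<and> s' \<in> ball s (snd p)}"
      then have "I p \<le> f (fst q) (snd q)" unfolding I_def by (rule INF_lower)
      then show "e2ennreal (I p + ereal K) \<le> e2ennreal (f (fst q) (snd q) + ereal K)"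
        by (intro e2ennreal_mono add_right_mono)
    qed
  qed
  finally show ?thesis .
qed

lemma pt1:
  fixes x :: ereal and K :: real
  assumes "K > 0"
  shows "e2ennreal (x + ereal K) + e2ennreal (- min x 0)
    \<le> e2ennreal (max x 0) + ennreal K + e2ennreal \<bar>- min x 0\<bar> * (if ereal K \<le> \<bar>- min x 0\<bar> then 1 else 0)"
proof (cases x)
  case (real r)
  show ?thesis
  proof (cases "r \<ge> 0")
    case True
    then show ?thesis using real assms by (simp add: ennreal_plus min_absorb2 max_absorb1)
  next
    case False
    show ?thesis
    proof (cases "r + K \<ge> 0")
      case True
      then show ?thesis using real assms False
        by (simp add: min_absorb1 max_absorb2 ennreal_plus[symmetric] ennreal_leI add_increasing2)
    next
      case False2: False
      then show ?thesis using real assms False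
        by (simp add: min_absorb1 max_absorb2 ennreal_neg add_increasing)
    qed
  qed
qed auto

lemma pt2:
  fixes x :: ereal and K :: real
  assumes "K > 0"
  shows "e2ennreal (max x 0) + ennreal K \<le> e2ennreal (x + ereal K) + e2ennreal (- min x 0)"
proof (cases x)
  case (real r)
  show ?thesis
  proof (cases "r \<ge> 0")
    case True
    then show ?thesis using real assms by (simp add: ennreal_plus min_absorb2 max_absorb1)
  next
    case False
    show ?thesis
    proof (cases "r + K \<ge> 0")
      case True
      then show ?thesis using real assms False
        by (simp add: min_absorb1 max_absorb2 ennreal_plus[symmetric] ennreal_leI)
    next
      case False2: False
      then show ?thesis using real assms False
        by (simp add: min_absorb1 max_absorb2 ennreal_neg ennreal_leI)
    qed
  qed
qed auto

lemma key_arith1: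
  fixes P N U C :: ennreal
  assumes "U + N \<le> P + C" "C < top" "min (enn2ereal P) (enn2ereal N) < \<infinity>"
  shows "enn2ereal U - enn2ereal C \<le> enn2ereal P - enn2ereal N"
  using assms
  by (cases P; cases N; cases U; cases C) (auto simp: ennreal_plus[symmetric] ennreal_le_iff top_unique simp del: ennreal_plus)

lemma key_arith2:
  fixes P N W C :: ennreal
  assumes "P + C \<le> W + N" "C < top" "min (enn2ereal P) (enn2ereal N) < \<infinity>"
  shows "enn2ereal P - enn2ereal N \<le> enn2ereal W - enn2ereal C"
  using assms
  by (cases P; cases N; cases W; cases C) (auto simp: ennreal_plus[symmetric] ennreal_le_iff top_unique simp del: ennreal_plus)

lemma fin_arith:
  fixes X Y L a :: ereal
  assumes "X \<le> L - a" "L - (a + ereal e) \<le> Y" "\<bar>a\<bar> \<noteq> \<infinity>" "L \<noteq> -\<infinity>"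
  shows "X \<le> Y + ereal e"
  using assms by (cases X; cases Y; cases L; cases a) auto

theorem theorem2p4:
  fixes \<mu>s :: "nat \<Rightarrow> 'a::metric_space measure"
    and \<mu> :: "'a measure"
    and f :: "nat \<Rightarrow> 'a \<Rightarrow> ereal"
  assumes sets_\<mu>s: "\<And>n. sets (\<mu>s n) = sets borel"
    and sets_\<mu>: "sets \<mu> = sets borel"
    and fin: "finite_measure \<mu>"
    and weak: "weak_conv \<mu>s \<mu>"
    and meas: "\<And>n. f n \<in> borel_measurable borel"
    and aui: "asymp_unif_integrable (\<lambda>n. neg_part (f n)) \<mu>s"
    and def_n: "\<And>n. integral_defined (\<mu>s n) (f n)"
    and def_lim: "integral_defined \<mu> (joint_liminf f)"
  shows "ext_integral \<mu> (joint_liminf f) \<le> liminf (\<lambda>n. ext_integral (\<mu>s n) (f n))"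
proof -
  have sp_n: "space (\<mu>s n) = UNIV" for n using sets_eq_imp_space_eq[OF sets_\<mu>s[of n]] by simp
  have sp: "space \<mu> = UNIV" using sets_eq_imp_space_eq[OF sets_\<mu>] by simp
  define g where "g = joint_liminf f"
  have g_meas: "g \<in> borel_measurable borel"
    unfolding g_def joint_liminf_env by (rule lsc_measurable[OF env_lsc])
  have gm: "g \<in> borel_measurable \<mu>"
    using g_meas by (simp add: measurable_cong_sets[OF sets_\<mu> refl])
  have fm: "f n \<in> borel_measurable (\<mu>s n)" for n
    using meas by (simp add: measurable_cong_sets[OF sets_\<mu>s refl])
  define M where "M n = emeasure (\<mu>s n) UNIV" for n
  define M0 where "M0 = emeasure \<mu> UNIV"
  have M0_fin: "M0 < top"
    using finite_measure.emeasure_finite[OF fin] by (simp add: M0_def top.not_eq_extremum)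
  have M_lim: "M \<longlonglongrightarrow> M0"
  proof -
    have "(\<lambda>n. ext_integral (\<mu>s n) (\<lambda>x. ereal ((\<lambda>_. 1::real) x))) \<longlonglongrightarrow> ext_integral \<mu> (\<lambda>x. ereal ((\<lambda>_. 1::real) x))"
    proof -
      have c1: "continuous_on UNIV (\<lambda>_::'a. 1::real)" by (rule continuous_on_const)
      have b1: "bounded (range (\<lambda>_::'a. 1::real))"
        unfolding bounded_iff by (intro exI[of _ 1]) auto
      show ?thesis using weak c1 b1 unfolding weak_conv_def by blast
    qed
    then have "(\<lambda>n. enn2ereal (\<integral>\<^sup>+ x. ennreal 1 \<partial>\<mu>s n)) \<longlonglongrightarrow> enn2ereal (\<integral>\<^sup>+ x. ennreal 1 \<partial>\<mu>)"
      by (simp only: ext_nonneg[of "\<lambda>_. 1"])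
    then show ?thesis by (simp add: M_def[abs_def] M0_def sp_n sp)
  qed
  show ?thesis
  proof (rule ereal_le_epsilon2)
    fix e :: real assume e: "0 < e"
    define e2 where "e2 = e / 2"
    have e2: "0 < e2" using e by (simp add: e2_def)
    define A where "A n K = (\<integral>\<^sup>+ x. e2ennreal \<bar>neg_part (f n) x\<bar> *
          indicator {y. \<bar>neg_part (f n) y\<bar> \<ge> ereal K} x \<partial>(\<mu>s n))" for n K
    have "((\<lambda>K::real. limsup (\<lambda>n. A n K)) \<longlongrightarrow> 0) at_top"
      using aui unfolding asymp_unif_integrable_def A_def .
    then have "\<forall>\<^sub>F K in at_top. limsup (\<lambda>n. A n K) < ennreal e2"
      using e2 by (intro order_tendstoD(2)) auto
    then have "\<forall>\<^sub>F K in at_top. 0 < K \<and> limsup (\<lambda>n. A n K) < ennreal e2"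
      by (intro eventually_conj eventually_gt_at_top)
    then obtain K where K: "0 < K" "limsup (\<lambda>n. A n K) < ennreal e2"
      unfolding eventually_at_top_linorder by blast
    have ev1: "\<forall>\<^sub>F n in sequentially. A n K < ennreal e2"
      using Limsup_lessD[OF K(2)] .
    define C where "C = ennreal K * M0 + ennreal e2"
    have "(\<lambda>n. ennreal K * M n) \<longlonglongrightarrow> ennreal K * M0"
      by (rule ennreal_tendsto_cmult) (simp_all add: M_lim)
    moreover have "ennreal K * M0 < C"
    proof -
      have "ennreal K * M0 \<noteq> top" using M0_fin by (simp add: ennreal_mult_eq_top_iff)
      then have "ennreal K * M0 + 0 < ennreal K * M0 + ennreal e2"
        using e2 by (subst ennreal_add_left_cancel_less) simp
      then show ?thesis unfolding C_def by simp
    qed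
    ultimately have ev2: "\<forall>\<^sub>F n in sequentially. ennreal K * M n < C"
      by (rule order_tendstoD(2))
    define v where "v n x = e2ennreal (f n x + ereal K)" for n x
    define U where "U n = (\<integral>\<^sup>+ x. v n x \<partial>\<mu>s n)" for n
    have C_fin: "C < top" unfolding C_def using M0_fin
      by (simp add: ennreal_mult_less_top)
    have stepa: "\<forall>\<^sub>F n in sequentially.
       enn2ereal (U n) - enn2ereal (C + ennreal e2) \<le> ext_integral (\<mu>s n) (f n)"
      using ev1 ev2
    proof eventually_elim
      case (elim n)
      have vm: "v n \<in> borel_measurable (\<mu>s n)" unfolding v_def using fm by measurable
      have nm: "(\<lambda>x. e2ennreal (neg_part (f n) x)) \<in> borel_measurable (\<mu>s n)"
        unfolding neg_part_def using fm by measurable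
      have pm: "(\<lambda>x. e2ennreal (pos_part (f n) x)) \<in> borel_measurable (\<mu>s n)"
        unfolding pos_part_def using fm by measurable
      have am: "(\<lambda>x. e2ennreal \<bar>neg_part (f n) x\<bar> * indicator {y. \<bar>neg_part (f n) y\<bar> \<ge> ereal K} x) \<in> borel_measurable (\<mu>s n)"
        unfolding neg_part_def using fm by measurable
      have "U n + (\<integral>\<^sup>+ x. e2ennreal (neg_part (f n) x) \<partial>\<mu>s n)
          = (\<integral>\<^sup>+ x. v n x + e2ennreal (neg_part (f n) x) \<partial>\<mu>s n)"
        unfolding U_def by (rule nn_integral_add[symmetric, OF vm nm])
      also have "\<dots> \<le> (\<integral>\<^sup>+ x. (e2ennreal (pos_part (f n) x) + ennreal K) +
            e2ennreal \<bar>neg_part (f n) x\<bar> * indicator {y. \<bar>neg_part (f n) y\<bar> \<ge> ereal K} x \<partial>\<mu>s n)"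
        unfolding v_def pos_part_def neg_part_def indicator_def of_bool_def mem_Collect_eq
        by (rule nn_integral_mono) (rule pt1[OF K(1)])
      also have "\<dots> = (\<integral>\<^sup>+ x. e2ennreal (pos_part (f n) x) \<partial>\<mu>s n) + ennreal K * M n + A n K"
      proof -
        have pkm: "(\<lambda>x. e2ennreal (pos_part (f n) x) + ennreal K) \<in> borel_measurable (\<mu>s n)"
          using pm by measurable
        have "(\<integral>\<^sup>+ x. (e2ennreal (pos_part (f n) x) + ennreal K) +
            e2ennreal \<bar>neg_part (f n) x\<bar> * indicator {y. \<bar>neg_part (f n) y\<bar> \<ge> ereal K} x \<partial>\<mu>s n)
          = (\<integral>\<^sup>+ x. e2ennreal (pos_part (f n) x) + ennreal K \<partial>\<mu>s n) + A n K"
          unfolding A_def by (rule nn_integral_add[OF pkm am])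
        also have "(\<integral>\<^sup>+ x. e2ennreal (pos_part (f n) x) + ennreal K \<partial>\<mu>s n)
          = (\<integral>\<^sup>+ x. e2ennreal (pos_part (f n) x) \<partial>\<mu>s n) + ennreal K * M n"
          by (subst nn_integral_add[OF pm]) (simp_all add: M_def sp_n)
        finally show ?thesis .
      qed
      finally have "U n + (\<integral>\<^sup>+ x. e2ennreal (neg_part (f n) x) \<partial>\<mu>s n)
          \<le> (\<integral>\<^sup>+ x. e2ennreal (pos_part (f n) x) \<partial>\<mu>s n) + ennreal K * M n + A n K" .
      also have "\<dots> \<le> (\<integral>\<^sup>+ x. e2ennreal (pos_part (f n) x) \<partial>\<mu>s n) + (C + ennreal e2)"
        using elim by (simp add: add.assoc add_mono less_imp_le)
      finally have "U n + (\<integral>\<^sup>+ x. e2ennreal (neg_part (f n) x) \<partial>\<mu>s n)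
          \<le> (\<integral>\<^sup>+ x. e2ennreal (pos_part (f n) x) \<partial>\<mu>s n) + (C + ennreal e2)" .
      then show ?case
        using key_arith1[OF _ _ def_n[of n, unfolded integral_defined_def pos_integral_def neg_integral_def]] C_fin
        unfolding ext_integral_def pos_integral_def neg_integral_def
        by (simp add: ennreal_add_less_top)
    qed
    define c where "c = enn2ereal (C + ennreal e2)"
    have c_fin: "\<bar>c\<bar> \<noteq> \<infinity>" unfolding c_def using C_fin
      by (simp add: ennreal_add_less_top less_top)
    have "liminf (\<lambda>n. enn2ereal (U n)) - c = liminf (\<lambda>n. enn2ereal (U n) + - c)"
      using Liminf_add_ereal_right[of sequentially "-c" "\<lambda>n. enn2ereal (U n)"] c_fin
      by (simp add: minus_ereal_def)
    also have "\<dots> \<le> liminf (\<lambda>n. ext_integral (\<mu>s n) (f n))"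
      by (rule Liminf_mono) (use stepa in \<open>simp add: minus_ereal_def c_def\<close>)
    finally have stepb: "enn2ereal (liminf U) - c \<le> liminf (\<lambda>n. ext_integral (\<mu>s n) (f n))"
      using Liminf_compose_continuous_mono[OF continuous_on_enn2ereal, of sequentially U]
      by (simp add: mono_def less_eq_ennreal.rep_eq)
    define W where "W = (\<integral>\<^sup>+ x. e2ennreal (g x + ereal K) \<partial>\<mu>)"
    have Hm: "env v {n} \<in> borel_measurable \<mu>" for n
      using lsc_measurable[OF env_lsc[of v "{n}"]] by (simp add: measurable_cong_sets[OF sets_\<mu> refl])
    have "W \<le> (\<integral>\<^sup>+ x. env v UNIV x \<partial>\<mu>)"
      unfolding W_def g_def v_def by (rule nn_integral_mono) (rule shift_le_env)
    also have "\<dots> \<le> (\<integral>\<^sup>+ x. (SUP n. env v {n} x) \<partial>\<mu>)"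
      by (rule nn_integral_mono) (rule env_UNIV_le)
    also have "\<dots> = (SUP n. \<integral>\<^sup>+ x. env v {n} x \<partial>\<mu>)"
      by (rule nn_integral_monotone_convergence_SUP[OF _ Hm])
         (auto simp: incseq_def le_fun_def intro: env_single_mono)
    also have "\<dots> \<le> liminf U"
    proof (rule SUP_least)
      fix n
      have "(\<integral>\<^sup>+ x. env v {n} x \<partial>\<mu>) \<le> liminf (\<lambda>m. \<integral>\<^sup>+ x. env v {n} x \<partial>\<mu>s m)"
        by (rule lsc_fatou[OF env_lsc sets_\<mu>s sets_\<mu> weak])
      also have "\<dots> \<le> liminf U"
        unfolding U_def
        by (rule Liminf_mono) (auto simp: eventually_sequentially intro!: exI[of _ n] nn_integral_mono env_single_le)
      finally show "(\<integral>\<^sup>+ x. env v {n} x \<partial>\<mu>) \<le> liminf U" .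
    qed
    finally have stepc: "W \<le> liminf U" .
    have stepd: "ext_integral \<mu> g \<le> enn2ereal W - enn2ereal (ennreal K * M0)"
    proof -
      have nm: "(\<lambda>x. e2ennreal (neg_part g x)) \<in> borel_measurable \<mu>"
        unfolding neg_part_def using gm by measurable
      have pm: "(\<lambda>x. e2ennreal (pos_part g x)) \<in> borel_measurable \<mu>"
        unfolding pos_part_def using gm by measurable
      have wm: "(\<lambda>x. e2ennreal (g x + ereal K)) \<in> borel_measurable \<mu>"
        using gm by measurable
      have "(\<integral>\<^sup>+ x. e2ennreal (pos_part g x) \<partial>\<mu>) + ennreal K * M0
          = (\<integral>\<^sup>+ x. e2ennreal (pos_part g x) + ennreal K \<partial>\<mu>)"
        by (simp add: nn_integral_add pm M0_def sp)
      also have "\<dots> \<le> (\<integral>\<^sup>+ x. e2ennreal (g x + ereal K) + e2ennreal (neg_part g x) \<partial>\<mu>)"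
        unfolding pos_part_def neg_part_def
        by (rule nn_integral_mono) (rule pt2[OF K(1)])
      also have "\<dots> = W + (\<integral>\<^sup>+ x. e2ennreal (neg_part g x) \<partial>\<mu>)"
        unfolding W_def by (rule nn_integral_add[OF wm nm])
      finally show ?thesis
        using key_arith2[OF _ _ def_lim[folded g_def, unfolded integral_defined_def pos_integral_def neg_integral_def]]
          M0_fin
        unfolding ext_integral_def pos_integral_def neg_integral_def
        by (simp add: ennreal_mult_less_top)
    qed
    have "enn2ereal W \<le> enn2ereal (liminf U)" using stepc by (simp add: less_eq_ennreal.rep_eq)
    then have X: "ext_integral \<mu> g \<le> enn2ereal (liminf U) - enn2ereal (ennreal K * M0)"
      using stepd
      by (metis ereal_minus_mono order.refl order_trans)
    have ceq: "c = enn2ereal (ennreal K * M0) + ereal e"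
    proof -
      have h: "ereal (e/2) + ereal (e/2) = ereal e" by simp
      show ?thesis
        unfolding c_def C_def e2_def plus_ennreal.rep_eq
        using e h by (simp add: enn2ereal_ennreal add.assoc)
    qed
    show "ext_integral \<mu> (joint_liminf f) \<le> liminf (\<lambda>n. ext_integral (\<mu>s n) (f n)) + ereal e"
      unfolding g_def[symmetric]
      by (rule fin_arith[OF X stepb[unfolded ceq]])
         (use M0_fin in \<open>simp_all add: ennreal_mult_less_top less_top\<close>)
  qed
qed
end
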